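(* Let $\varphi,\psi\in G$ and suppose there is $C_1>0$ with $\psi(t)\le C_1\varphi(t)$ for $t\in(0,1]$. The following are equivalent: (1) $\lim_{t\to 0+}\psi(t)/\varphi(t)=0$; (2) the identity inclusion $I:\Lambda(\varphi)\to\Lambda(\psi)$ is disjointly strictly singular; (3) there do not exist a sequence of nonzero pairwise disjoint functions $x_n\in\Lambda(\varphi)$ and a constant $C_2>0$ such that $\|x_n\|_{\Lambda(\varphi)}\le C_2\|x_n\|_{\Lambda(\psi)}$ for all $n=1,2,\dots$.
   Context: All functions are Lebesgue measurable on $[0,1]$, and $x^*$ denotes the decreasing left-continuous rearrangement of $|x|$. $G$ denotes the class of all positive increasing concave functions on $(0,1]$. For $\varphi\in G$, the Lorentz space $\Lambda(\varphi)$ consists of all measurable $x$ on $[0,1]$ with $\|x\|_{\Lambda(\varphi)}=\int_0^1 x^*(s)\,d\varphi(s)<\infty$. A bounded linear operator $T$ from a Banach lattice $X$ into a Banach space $Y$ is disjointly strictly singular (DSS) if there is no sequence of nonzero pairwise disjoint elements $x_n\in X$ such that the restriction of $T$ to their closed linear span $[x_n]$ is an isomorphism (onto its image). *)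

theory Defs
  imports "HOL-Analysis.Analysis"
begin

definition classG :: "(real \<Rightarrow> real) \<Rightarrow> bool" where
  "classG \<phi> \<longleftrightarrow> (\<forall>t\<in>{0<..1}. 0 < \<phi> t) \<and> mono_on {0<..1} \<phi> \<and> concave_on {0<..1} \<phi>"

definition distf :: "(real \<Rightarrow> real) \<Rightarrow> real \<Rightarrow> real" where
  "distf x l = measure lebesgue {s\<in>{0..1}. l < \<bar>x s\<bar>}"

text \<open>Decreasing left-continuous rearrangement of |x| (values in [0,\<infinity>]):
  x*(t) = inf{\<lambda> \<ge> 0. d_x(\<lambda>) < t} for t > 0, and x*(0) = ess sup |x| = x*(0+).\<close>
definition rearr :: "(real \<Rightarrow> real) \<Rightarrow> real \<Rightarrow> ennreal" where
  "rearr x t = (if 0 < t then Inf {ennreal l | l. 0 \<le> l \<and> distf x l < t}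
                else Inf {ennreal l | l. 0 \<le> l \<and> distf x l = 0})"

text \<open>Extension of \<phi> \<in> G to a right-continuous increasing function on the real line
  with \<phi>(0) = 0 convention: the jump \<phi>(0+) sits at the point 0.\<close>
definition ext_fun :: "(real \<Rightarrow> real) \<Rightarrow> real \<Rightarrow> real" where
  "ext_fun \<phi> t = (if t < 0 then 0
                   else if t = 0 then Inf (\<phi> ` {0<..1})
                   else \<phi> (min t 1))"

definition lnorm :: "(real \<Rightarrow> real) \<Rightarrow> (real \<Rightarrow> real) \<Rightarrow> ennreal" where
  "lnorm \<phi> x = (\<integral>\<^sup>+ s. rearr x s * indicator {0..1} s \<partial>interval_measure (ext_fun \<phi>))"

definition Lorentz :: "(real \<Rightarrow> real) \<Rightarrow> (real \<Rightarrow> real) set" where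
  "Lorentz \<phi> = {x. x \<in> borel_measurable (lebesgue_on {0..1}) \<and> lnorm \<phi> x < \<infinity>}"

definition nonzero_fun :: "(real \<Rightarrow> real) \<Rightarrow> bool" where
  "nonzero_fun x \<longleftrightarrow> \<not> (AE s in lebesgue_on {0..1}. x s = 0)"

definition disjoint_seq :: "(nat \<Rightarrow> real \<Rightarrow> real) \<Rightarrow> bool" where
  "disjoint_seq x \<longleftrightarrow> (\<forall>n m. n \<noteq> m \<longrightarrow> (AE s in lebesgue_on {0..1}. x n s = 0 \<or> x m s = 0))"

definition clspan :: "(real \<Rightarrow> real) \<Rightarrow> (nat \<Rightarrow> real \<Rightarrow> real) \<Rightarrow> (real \<Rightarrow> real) set" where
  "clspan \<phi> x = {y \<in> Lorentz \<phi>. \<forall>\<epsilon>>0. \<exists>N a. lnorm \<phi> (\<lambda>s. y s - (\<Sum>i<N. a i * x i s)) < ennreal \<epsilon>}"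

text \<open>The inclusion \<Lambda>(\<phi>) \<rightarrow> \<Lambda>(\<psi>) restricted to [x_n] is an isomorphism onto its image
  (it is bounded and injective, so this means it is bounded below).\<close>
definition incl_iso_on :: "(real \<Rightarrow> real) \<Rightarrow> (real \<Rightarrow> real) \<Rightarrow> (real \<Rightarrow> real) set \<Rightarrow> bool" where
  "incl_iso_on \<phi> \<psi> Y \<longleftrightarrow> (\<exists>c>0. \<forall>y\<in>Y. lnorm \<phi> y \<le> ennreal c * lnorm \<psi> y)"

definition DSS_incl :: "(real \<Rightarrow> real) \<Rightarrow> (real \<Rightarrow> real) \<Rightarrow> bool" where
  "DSS_incl \<phi> \<psi> \<longleftrightarrow> \<not> (\<exists>x. (\<forall>n. x n \<in> Lorentz \<phi> \<and> nonzero_fun (x n)) \<and> disjoint_seq x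
                              \<and> incl_iso_on \<phi> \<psi> (clspan \<phi> x))"

end

theory Submission
  imports Defs
begin

lemma G_pos: "classG \<phi> \<Longrightarrow> 0 < t \<Longrightarrow> t \<le> 1 \<Longrightarrow> 0 < \<phi> t"
  by (auto simp: classG_def)

lemma G_mono: "classG \<phi> \<Longrightarrow> 0 < s \<Longrightarrow> s \<le> t \<Longrightarrow> t \<le> 1 \<Longrightarrow> \<phi> s \<le> \<phi> t"
  unfolding classG_def mono_on_def by auto

lemma G_conc:
  assumes "classG \<phi>" "0 < x" "x \<le> 1" "0 < y" "y \<le> 1" "0 \<le> u" "0 \<le> v" "u + v = 1"
  shows "u * \<phi> x + v * \<phi> y \<le> \<phi> (u * x + v * y)"
proof -
  have "convex_on {0<..1} (\<lambda>x. - \<phi> x)" using assms(1) by (simp add: classG_def concave_on_def)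
  then have "- \<phi> ((1 - v) *\<^sub>R x + v *\<^sub>R y) \<le> (1 - v) * (- \<phi> x) + v * (- \<phi> y)"
    by (rule convex_onD) (use assms in auto)
  moreover have "u = 1 - v" using assms by simp
  ultimately show ?thesis by (simp only: real_scaleR_def)
qed

lemma G_double:
  assumes "classG \<phi>" "0 < t" "2 * t \<le> 1"
  shows "\<phi> (2 * t) \<le> 3 * \<phi> t"
proof -
  have "(1/3) * \<phi> (2*t) + (2/3) * \<phi> (t/2) \<le> \<phi> ((1/3) * (2*t) + (2/3) * (t/2))"
    by (rule G_conc) (use assms in auto)
  moreover have "(1/3) * (2*t) + (2/3) * (t/2) = t" by simp
  moreover have "0 < \<phi> (t/2)" by (rule G_pos) (use assms in auto)
  ultimately have "(1/3) * \<phi> (2*t) + (2/3) * \<phi> (t/2) \<le> \<phi> t" by simp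
  with \<open>0 < \<phi> (t/2)\<close> show ?thesis by linarith
qed

lemma G_cont:
  assumes G: "classG \<phi>"
  shows "continuous_on {0<..1} \<phi>"
proof -
  have cv0: "convex_on {0<..1} (\<lambda>x. - \<phi> x)" using G
    by (simp add: classG_def concave_on_def)
  have cv: "convex_on {0<..<1} (\<lambda>x. - \<phi> x)"
    by (rule convex_on_subset[OF cv0]) auto
  have c1: "continuous_on {0<..<1} (\<lambda>x. - \<phi> x)"
    by (rule convex_on_continuous[OF _ cv]) auto
  have c2: "continuous_on {0<..<1} \<phi>"
    using continuous_on_minus[OF c1] by simp
  show ?thesis
    unfolding continuous_on_eq_continuous_within
  proof
    fix x :: real assume x: "x \<in> {0<..1}"
    show "continuous (at x within {0<..1}) \<phi>"
    proof (cases "x < 1")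
      case True
      then have "isCont \<phi> x" using c2 x
        by (simp add: continuous_on_eq_continuous_at)
      then show ?thesis by (rule continuous_at_imp_continuous_within)
    next
      case False
      then have x1: "x = 1" using x by auto
      define K where "K = \<phi> 1 - \<phi> (1/2)"
      have K: "K \<ge> 0" unfolding K_def using G_mono[OF G, of "1/2" 1] by auto
      have bound: "\<bar>\<phi> t - \<phi> 1\<bar> \<le> 2 * (1 - t) * K" if t: "1/2 \<le> t" "t \<le> 1" for t
      proof -
        have "(2*t - 1) * \<phi> 1 + (2 - 2*t) * \<phi> (1/2) \<le> \<phi> ((2*t - 1) * 1 + (2 - 2*t) * (1/2))"
          by (rule G_conc[OF G]) (use t in auto)
        moreover have "(2*t - 1) * 1 + (2 - 2*t) * (1/2) = t" by (simp add: algebra_simps)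
        ultimately have a: "(2*t - 1) * \<phi> 1 + (2 - 2*t) * \<phi> (1/2) \<le> \<phi> t" by metis
        have b: "\<phi> t \<le> \<phi> 1" by (rule G_mono[OF G]) (use t in auto)
        have c: "\<phi> 1 - ((2*t - 1) * \<phi> 1 + (2 - 2*t) * \<phi> (1/2)) = 2 * (1 - t) * K"
          unfolding K_def by (simp add: algebra_simps)
        show ?thesis using a b c by linarith
      qed
      show ?thesis unfolding x1 continuous_within_eps_delta
      proof (intro allI impI)
        fix e :: real assume e: "e > 0"
        define d where "d = min (1/2) (e / (2 * K + 1))"
        have d: "d > 0" using e K by (auto simp: d_def)
        show "\<exists>d>0. \<forall>x'\<in>{0<..1}. dist x' 1 < d \<longrightarrow> dist (\<phi> x') (\<phi> 1) < e"
        proof (intro exI[of _ d] conjI ballI impI d)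
          fix t :: real assume t: "t \<in> {0<..1}" "dist t 1 < d"
          then have t': "1/2 \<le> t" "t \<le> 1" "1 - t < e / (2*K+1)"
            by (auto simp: d_def dist_real_def)
          have "\<bar>\<phi> t - \<phi> 1\<bar> \<le> 2 * (1 - t) * K" by (rule bound) (use t' in auto)
          also have "\<dots> = (1 - t) * (2*K)" by simp
          also have "\<dots> \<le> (1 - t) * (2*K+1)" using t' by (intro mult_left_mono) auto
          also have "\<dots> < e" using t'(3) K
            by (simp add: pos_less_divide_eq mult.commute)
          finally show "dist (\<phi> t) (\<phi> 1) < e" by (simp add: dist_real_def)
        qed
      qed
    qed
  qed
qed

lemma Inf_G_bounds:
  assumes G: "classG \<phi>"
  shows "0 \<le> Inf (\<phi> ` {0<..1})" and "\<And>t. t \<in> {0<..1} \<Longrightarrow> Inf (\<phi> ` {0<..1}) \<le> \<phi> t"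
proof -
  have bdd: "bdd_below (\<phi> ` {0<..1})" using G_pos[OF G]
    by (intro bdd_belowI[of _ 0]) (auto intro: less_imp_le)
  show "0 \<le> Inf (\<phi> ` {0<..1})"
    using G_pos[OF G] by (intro cInf_greatest) (auto intro: less_imp_le)
  show "\<And>t. t \<in> {0<..1} \<Longrightarrow> Inf (\<phi> ` {0<..1}) \<le> \<phi> t"
    using bdd by (intro cInf_lower) auto
qed

lemma ext_mono:
  assumes G: "classG \<phi>" and xy: "x \<le> y"
  shows "ext_fun \<phi> x \<le> ext_fun \<phi> y"
proof -
  note I = Inf_G_bounds[OF G]
  consider "y < 0" | "x < 0" "0 \<le> y" | "x = 0" "0 \<le> y" | "0 < x" using xy by linarith
  then show ?thesis
  proof cases
    case 1 then show ?thesis using xy by (simp add: ext_fun_def)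
  next
    case 2
    have "0 \<le> ext_fun \<phi> y"
    proof (cases "y = 0")
      case True then show ?thesis using I(1) by (simp add: ext_fun_def)
    next
      case False
      then have "0 < \<phi> (min y 1)" using 2 by (intro G_pos[OF G]) auto
      then show ?thesis using 2 False by (simp add: ext_fun_def)
    qed
    then show ?thesis using 2 by (simp add: ext_fun_def)
  next
    case 3
    show ?thesis
    proof (cases "y = 0")
      case True then show ?thesis using 3 by simp
    next
      case False
      then have "Inf (\<phi> ` {0<..1}) \<le> \<phi> (min y 1)" using 3 by (intro I(2)) auto
      then show ?thesis using 3 False by (simp add: ext_fun_def)
    qed
  next
    case 4
    have "\<phi> (min x 1) \<le> \<phi> (min y 1)" using 4 xy by (intro G_mono[OF G]) (auto simp: min_def)
    then show ?thesis using 4 xy by (simp add: ext_fun_def)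
  qed
qed

lemma rcont_from_local:
  fixes f g :: "real \<Rightarrow> real"
  assumes "a < b" "\<forall>t\<in>{a<..<b}. f t = g t" "f a = g a" "isCont g a"
  shows "continuous (at_right a) f"
proof -
  have "(g \<longlongrightarrow> g a) (at_right a)" using assms(4)
    by (simp add: isCont_def filterlim_at_split)
  moreover have "\<forall>\<^sub>F t in at_right a. f t = g t"
    using eventually_at_right_real[OF assms(1)] by (rule eventually_mono) (use assms(2) in auto)
  ultimately have "(f \<longlongrightarrow> f a) (at_right a)"
    using assms(3) tendsto_cong by force
  then show ?thesis by (simp add: continuous_within)
qed

lemma ext_rcont:
  assumes G: "classG \<phi>"
  shows "continuous (at_right a) (ext_fun \<phi>)"
proof -
  consider "a < 0" | "a = 0" | "0 < a" "a < 1" | "1 \<le> a" by linarith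
  then show ?thesis
  proof cases
    case 1
    show ?thesis
      by (rule rcont_from_local[of a 0 _ "\<lambda>_. 0"]) (use 1 in \<open>auto simp: ext_fun_def\<close>)
  next
    case 3
    have "isCont \<phi> a"
    proof -
      have "continuous_on {0<..<1} \<phi>"
        by (rule continuous_on_subset[OF G_cont[OF G]]) auto
      then show ?thesis using 3 by (simp add: continuous_on_eq_continuous_at)
    qed
    then show ?thesis
      by (intro rcont_from_local[of a 1 _ \<phi>]) (use 3 in \<open>auto simp: ext_fun_def\<close>)
  next
    case 4
    show ?thesis
      by (rule rcont_from_local[of a "a+1" _ "\<lambda>_. \<phi> 1"]) (use 4 in \<open>auto simp: ext_fun_def\<close>)
  next
    case 2
    let ?I = "Inf (\<phi> ` {0<..1})"
    have bdd: "bdd_below (\<phi> ` {0<..1})" using G_pos[OF G]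
      by (intro bdd_belowI[of _ 0]) (auto intro: less_imp_le)
    have "(ext_fun \<phi> \<longlongrightarrow> ?I) (at_right 0)"
    proof (rule tendstoI)
      fix e :: real assume e: "0 < e"
      have "?I < ?I + e" using e by simp
      then have "\<exists>x\<in>\<phi> ` {0<..1}. x < ?I + e"
        by (subst cInf_less_iff[OF _ bdd, symmetric]) auto
      then obtain t0 where t0: "t0 \<in> {0<..1}" "\<phi> t0 < ?I + e"
        by auto
      show "\<forall>\<^sub>F t in at_right 0. dist (ext_fun \<phi> t) ?I < e"
      proof (rule eventually_mono[OF eventually_at_right_real[of 0 t0]])
        show "0 < t0" using t0 by auto
      next
        fix t assume t: "t \<in> {0<..<t0}"
        then have "ext_fun \<phi> t = \<phi> t" using t0 by (simp add: ext_fun_def)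
        moreover have "\<phi> t \<le> \<phi> t0" by (rule G_mono[OF G]) (use t t0 in auto)
        moreover have "?I \<le> \<phi> t" by (rule Inf_G_bounds(2)[OF G]) (use t t0 in auto)
        ultimately show "dist (ext_fun \<phi> t) ?I < e" using t0 by (simp add: dist_real_def)
      qed
    qed
    then show ?thesis using 2 by (simp add: continuous_within ext_fun_def)
  qed
qed

lemma ext_fun_pos: "classG \<phi> \<Longrightarrow> 0 < b \<Longrightarrow> b \<le> 1 \<Longrightarrow> ext_fun \<phi> b = \<phi> b"
  by (simp add: ext_fun_def)


abbreviation "mu \<phi> \<equiv> interval_measure (ext_fun \<phi>)"

lemma mu_Ioc:
  assumes G: "classG \<phi>" and "a \<le> b"
  shows "emeasure (mu \<phi>) {a<..b} = ext_fun \<phi> b - ext_fun \<phi> a"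
  by (rule emeasure_interval_measure_Ioc[OF assms(2)]) (auto intro: ext_mono[OF G] ext_rcont[OF G])

lemma mu_sigma_finite: "classG \<phi> \<Longrightarrow> sigma_finite_measure (mu \<phi>)"
  by (rule sigma_finite_interval_measure) (auto intro: ext_mono ext_rcont)

lemma mu_neg_null:
  assumes G: "classG \<phi>"
  shows "emeasure (mu \<phi>) {-1<..<0} = 0"
proof -
  have eq: "{-1<..<(0::real)} = (\<Union>n. {-1<..- inverse (real (Suc n))})"
  proof safe
    fix x :: real assume x: "x \<in> {-1<..<0}"
    then obtain n where "inverse (real (Suc n)) < - x"
      using reals_Archimedean[of "-x"] by auto
    then have "x \<in> {-1<..- inverse (real (Suc n))}" using x by auto
    then show "x \<in> (\<Union>n. {-1<..- inverse (real (Suc n))})" by blast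
  next
    fix x :: real and n assume x: "x \<in> {-1<..- inverse (real (Suc n))}"
    then have "-1 < x" "x \<le> - inverse (real (Suc n))" by auto
    moreover have "0 < inverse (real (Suc n))" by simp
    ultimately show "x \<in> {-1<..<0}" unfolding greaterThanLessThan_iff by linarith
  qed
  have "emeasure (mu \<phi>) {-1<..- inverse (real (Suc n))} = 0" for n
  proof (cases "-1 \<le> - inverse (real (Suc n))")
    case True
    then show ?thesis by (subst mu_Ioc[OF G True]) (simp add: ext_fun_def)
  next
    case False
    then have "{-1<..- inverse (real (Suc n))} = {}" by auto
    then show ?thesis by simp
  qed
  then show ?thesis unfolding eq by (intro emeasure_UN_eq_0) auto
qed

lemma mu_Icc0:
  assumes G: "classG \<phi>" and b: "0 < b" "b \<le> 1"
  shows "emeasure (mu \<phi>) {0..b} = ennreal (\<phi> b)"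
proof (rule antisym)
  have "emeasure (mu \<phi>) {0..b} \<le> emeasure (mu \<phi>) {-1<..b}"
    by (rule emeasure_mono) auto
  also have "\<dots> = ennreal (\<phi> b)" using b by (subst mu_Ioc[OF G]) (auto simp: ext_fun_def)
  finally show "emeasure (mu \<phi>) {0..b} \<le> ennreal (\<phi> b)" .
next
  have "ennreal (\<phi> b) = emeasure (mu \<phi>) {-1<..b}"
    using b by (subst mu_Ioc[OF G]) (auto simp: ext_fun_def)
  also have "\<dots> \<le> emeasure (mu \<phi>) ({-1<..<0} \<union> {0..b})"
    by (rule emeasure_mono) auto
  also have "\<dots> \<le> emeasure (mu \<phi>) {-1<..<0} + emeasure (mu \<phi>) {0..b}"
    by (rule emeasure_subadditive) auto
  also have "\<dots> = emeasure (mu \<phi>) {0..b}" using mu_neg_null[OF G] by simp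
  finally show "ennreal (\<phi> b) \<le> emeasure (mu \<phi>) {0..b}" .
qed

lemma mu_initial:
  assumes G: "classG \<phi>" and a: "0 < a" "a \<le> 1"
    and L: "{0..<a} \<subseteq> L" "L \<subseteq> {0..a}" "L \<in> sets borel"
  shows "emeasure (mu \<phi>) L = ennreal (\<phi> a)"
proof (rule antisym)
  have "emeasure (mu \<phi>) L \<le> emeasure (mu \<phi>) {0..a}"
    by (rule emeasure_mono) (use L in auto)
  then show "emeasure (mu \<phi>) L \<le> ennreal (\<phi> a)" using mu_Icc0[OF G a] by simp
  then have fin: "emeasure (mu \<phi>) L = ennreal (enn2real (emeasure (mu \<phi>) L))"
    by (metis ennreal_enn2real_if ennreal_neq_top neq_top_trans)
  define r where "r = enn2real (emeasure (mu \<phi>) L)"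
  have lowb: "\<phi> b \<le> r" if b: "0 < b" "b < a" for b
  proof -
    have "ennreal (\<phi> b) = emeasure (mu \<phi>) {0..b}" using mu_Icc0[OF G, of b] b a by simp
    also have "\<dots> \<le> emeasure (mu \<phi>) L" by (rule emeasure_mono) (use L b in auto)
    finally have "ennreal (\<phi> b) \<le> ennreal r" using fin r_def by simp
    moreover have "0 \<le> r" by (simp add: r_def)
    ultimately show ?thesis by simp
  qed
  have "\<phi> a \<le> r"
  proof (rule ccontr)
    assume "\<not> \<phi> a \<le> r"
    then have e: "0 < \<phi> a - r" by simp
    obtain d where d: "d > 0" "\<forall>x'\<in>{0<..1}. dist x' a < d \<longrightarrow> dist (\<phi> x') (\<phi> a) < \<phi> a - r"
      using G_cont[OF G] a e unfolding continuous_on_iff by (metis greaterThanAtMost_iff)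
    define b where "b = max (a/2) (a - d/2)"
    have b: "0 < b" "b < a" "b \<le> 1" "dist b a < d" using a d by (auto simp: b_def dist_real_def)
    then have "dist (\<phi> b) (\<phi> a) < \<phi> a - r" using d by auto
    then have "r < \<phi> b" by (auto simp: dist_real_def)
    with lowb[OF b(1,2)] show False by simp
  qed
  then have "ennreal (\<phi> a) \<le> ennreal r" by (rule ennreal_leI)
  then show "ennreal (\<phi> a) \<le> emeasure (mu \<phi>) L" using fin r_def by metis
qed


abbreviation "lev x (l::real) \<equiv> {s\<in>{0..1::real}. l < \<bar>x s\<bar>}"

lemma lev_sets:
  assumes [measurable]: "x \<in> borel_measurable (lebesgue_on {0..1})"
  shows "lev x l \<in> sets lebesgue"
proof -
  have ab: "(\<lambda>s. \<bar>x s\<bar>) \<in> borel_measurable (lebesgue_on {0..1})"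
    using assms by (rule borel_measurable_abs)
  have "(\<lambda>s. \<bar>x s\<bar>) -` {l<..} \<inter> space (lebesgue_on {0..1}) \<in> sets (lebesgue_on {0..1})"
    by (rule measurable_sets[OF ab]) auto
  moreover have "(\<lambda>s. \<bar>x s\<bar>) -` {l<..} \<inter> space (lebesgue_on {0..1}) = {s \<in> space (lebesgue_on {0..1}). l < \<bar>x s\<bar>}"
    by auto
  ultimately have "{s \<in> space (lebesgue_on {0..1}). l < \<bar>x s\<bar>} \<in> sets (lebesgue_on {0..1})"
    by simp
  then have "lev x l \<in> sets (lebesgue_on {0..1})" by simp
  then show ?thesis by (subst (asm) sets_restrict_space_iff) auto
qed

lemma lev_anti: "l1 \<le> l2 \<Longrightarrow> lev x l2 \<subseteq> lev x l1"
  by auto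

lemma emeasure_sub01_fin:
  assumes "A \<subseteq> {0..1::real}"
  shows "emeasure lebesgue A \<noteq> \<infinity>"
proof -
  have "emeasure lebesgue A \<le> emeasure lebesgue {0..1::real}"
    by (rule emeasure_mono) (use assms in auto)
  also have "\<dots> = 1" by simp
  finally show ?thesis by (auto simp: top_unique)
qed

lemma distf_nonneg: "0 \<le> distf x l"
  by (simp add: distf_def)

lemma lev_fmeas:
  assumes "x \<in> borel_measurable (lebesgue_on {0..1})"
  shows "lev x l \<in> fmeasurable lebesgue"
proof (rule fmeasurableI[OF lev_sets[OF assms]])
  have "emeasure lebesgue (lev x l) \<noteq> \<infinity>" by (rule emeasure_sub01_fin) auto
  then show "emeasure lebesgue (lev x l) < \<infinity>" by (simp add: less_top)
qed

lemma distf_le1: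
  assumes "x \<in> borel_measurable (lebesgue_on {0..1})"
  shows "distf x l \<le> 1"
proof -
  have "distf x l \<le> measure lebesgue {0..1::real}"
    unfolding distf_def
    by (rule measure_mono_fmeasurable) (use lev_sets[OF assms] in auto)
  then show ?thesis by simp
qed

lemma distf_antimono:
  assumes "x \<in> borel_measurable (lebesgue_on {0..1})" "l \<le> l'"
  shows "distf x l' \<le> distf x l"
  unfolding distf_def
  by (rule measure_mono_fmeasurable) (use lev_sets[OF assms(1)] lev_fmeas[OF assms(1)] assms(2) in auto)

lemma distf_rcont:
  assumes "x \<in> borel_measurable (lebesgue_on {0..1})"
  shows "(\<lambda>n. distf x (l + inverse (real (Suc n)))) \<longlonglongrightarrow> distf x l"
proof -
  define A where "A n = lev x (l + inverse (real (Suc n)))" for n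
  have U: "(\<Union>n. A n) = lev x l"
  proof (intro equalityI subsetI)
    fix s assume "s \<in> (\<Union>n. A n)"
    then obtain n where "s \<in> A n" by blast
    then have h: "s \<in> {0..1} \<and> l + inverse (real (Suc n)) < \<bar>x s\<bar>" unfolding A_def by (simp only: mem_Collect_eq)
    have i: "0 < inverse (real (Suc n))" by (simp del: of_nat_Suc)
    have "l < \<bar>x s\<bar>" using h i by linarith
    then show "s \<in> lev x l" using h by blast
  next
    fix s assume s: "s \<in> lev x l"
    then have "0 < \<bar>x s\<bar> - l" by auto
    then obtain n where "inverse (real (Suc n)) < \<bar>x s\<bar> - l"
      using reals_Archimedean by blast
    then have "s \<in> A n" using s unfolding A_def by auto
    then show "s \<in> (\<Union>n. A n)" by blast
  qed
  have inc: "incseq A"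
  proof (rule incseq_SucI)
    fix n
    have "inverse (real (Suc (Suc n))) \<le> inverse (real (Suc n))"
      by (rule le_imp_inverse_le) auto
    then have "l + inverse (real (Suc (Suc n))) \<le> l + inverse (real (Suc n))" by simp
    then show "A n \<subseteq> A (Suc n)" unfolding A_def by (rule lev_anti)
  qed
  have "(\<lambda>n. measure lebesgue (A n)) \<longlonglongrightarrow> measure lebesgue (\<Union>n. A n)"
  proof (rule Lim_measure_incseq[OF _ inc])
    show "range A \<subseteq> sets lebesgue" using lev_sets[OF assms] by (auto simp: A_def)
    show "emeasure lebesgue (\<Union>n. A n) \<noteq> \<infinity>" unfolding U by (rule emeasure_sub01_fin) auto
  qed
  then show ?thesis unfolding U by (simp add: A_def distf_def)
qed

lemma distf_rcont_gt:
  assumes "x \<in> borel_measurable (lebesgue_on {0..1})" "s < distf x l"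
  shows "\<exists>d>0. s < distf x (l + d)"
proof -
  from distf_rcont[OF assms(1), of l] assms(2)
  have "\<forall>\<^sub>F n in sequentially. s < distf x (l + inverse (real (Suc n)))"
    by (rule order_tendstoD)
  then obtain n where "s < distf x (l + inverse (real (Suc n)))"
    by (auto simp: eventually_sequentially)
  then show ?thesis by (intro exI[of _ "inverse (real (Suc n))"]) auto
qed

lemma rearr_antimono:
  assumes "s \<le> s'"
  shows "rearr x s' \<le> rearr x s"
proof (cases "0 < s")
  case True
  then show ?thesis using assms unfolding rearr_def
    by (auto intro!: Inf_superset_mono)
next
  case False
  show ?thesis
  proof (cases "0 < s'")
    case True
    then show ?thesis using False unfolding rearr_def
      by (auto intro!: Inf_superset_mono)
  next
    case False
    then show ?thesis using \<open>\<not> 0 < s\<close> unfolding rearr_def by simp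
  qed
qed

lemma rearr_le:
  assumes "0 \<le> t" "0 \<le> s" "distf x t < s \<or> distf x t = 0"
  shows "rearr x s \<le> ennreal t"
proof (cases "0 < s")
  case True
  then have "distf x t < s" using assms by auto
  then show ?thesis using True assms(1) unfolding rearr_def
    by (auto intro!: Inf_lower)
next
  case False
  then have "s = 0" "distf x t = 0" using assms distf_nonneg[of x t] by auto
  then show ?thesis using assms(1) unfolding rearr_def
    by (auto intro!: Inf_lower)
qed

lemma rearr_gt:
  assumes meas: "x \<in> borel_measurable (lebesgue_on {0..1})"
    and "0 \<le> t" "0 \<le> s" "s < distf x t"
  shows "ennreal t < rearr x s"
proof -
  obtain d where d: "d > 0" "s < distf x (t + d)"
    using distf_rcont_gt[OF meas assms(4)] by auto
  have big: "t + d \<le> l" if "distf x l \<le> s" for l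
  proof (rule ccontr)
    assume "\<not> t + d \<le> l"
    then have "distf x (t + d) \<le> distf x l" by (intro distf_antimono[OF meas]) auto
    with that d show False by simp
  qed
  have "ennreal (t + d) \<le> rearr x s"
  proof (cases "0 < s")
    case True
    show ?thesis unfolding rearr_def using True
      by (auto intro!: Inf_greatest ennreal_leI big)
  next
    case False
    then have "s = 0" using assms by auto
    show ?thesis unfolding rearr_def using False \<open>s = 0\<close>
      by (auto intro!: Inf_greatest ennreal_leI big)
  qed
  moreover have "ennreal t < ennreal (t + d)" using d assms by (simp add: ennreal_lessI)
  ultimately show ?thesis by simp
qed

definition gfun :: "(real \<Rightarrow> real) \<Rightarrow> real \<Rightarrow> ennreal" where
  "gfun x s = rearr x s * indicator {0..1} s"

lemma gfun_level:
  assumes meas: "x \<in> borel_measurable (lebesgue_on {0..1})" and t: "0 \<le> t"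
  shows "{0..<distf x t} \<subseteq> {s. ennreal t < gfun x s}"
    and "{s. ennreal t < gfun x s} \<subseteq> {0..distf x t}"
    and "distf x t = 0 \<Longrightarrow> {s. ennreal t < gfun x s} = {}"
proof -
  have d1: "distf x t \<le> 1" by (rule distf_le1[OF meas])
  show "{0..<distf x t} \<subseteq> {s. ennreal t < gfun x s}"
  proof
    fix s assume s: "s \<in> {0..<distf x t}"
    then have "ennreal t < rearr x s" using rearr_gt[OF meas t] by auto
    then show "s \<in> {s. ennreal t < gfun x s}" using s d1 by (auto simp: gfun_def)
  qed
  show "{s. ennreal t < gfun x s} \<subseteq> {0..distf x t}"
  proof
    fix s assume s: "s \<in> {s. ennreal t < gfun x s}"
    then have s01: "s \<in> {0..1}" by (auto simp: gfun_def indicator_def of_bool_def split: if_splits)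
    have "\<not> distf x t < s"
    proof
      assume "distf x t < s"
      then have "rearr x s \<le> ennreal t" using rearr_le[of t s x] t s01 by auto
      then show False using s s01 by (auto simp: gfun_def)
    qed
    then show "s \<in> {0..distf x t}" using s01 by auto
  qed
  assume z: "distf x t = 0"
  show "{s. ennreal t < gfun x s} = {}"
  proof (rule ccontr)
    assume "{s. ennreal t < gfun x s} \<noteq> {}"
    then obtain s where s: "ennreal t < gfun x s" by auto
    then have s01: "s \<in> {0..1}" by (auto simp: gfun_def indicator_def of_bool_def split: if_splits)
    then have "rearr x s \<le> ennreal t" using rearr_le[of t s x] t z by auto
    then show False using s s01 by (auto simp: gfun_def)
  qed
qed

lemma gfun_meas: "gfun x \<in> borel_measurable borel"
proof (rule borel_measurableI_greater)
  fix y :: ennreal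
  have "is_interval {s. y < gfun x s}"
    unfolding is_interval_1
  proof (intro ballI allI impI, elim conjE)
    fix a b z assume a: "a \<in> {s. y < gfun x s}" and b: "b \<in> {s. y < gfun x s}" and az: "a \<le> z" and zb: "z \<le> b"
    have a01: "a \<in> {0..1}" using a by (auto simp: gfun_def indicator_def of_bool_def split: if_splits)
    have b01: "b \<in> {0..1}" using b by (auto simp: gfun_def indicator_def of_bool_def split: if_splits)
    have "rearr x b \<le> rearr x z" by (rule rearr_antimono[OF zb])
    moreover have "y < rearr x b" using b b01 by (simp add: gfun_def)
    ultimately show "z \<in> {s. y < gfun x s}" using a01 b01 az zb by (auto simp: gfun_def)
  qed
  then show "{s \<in> space borel. y < gfun x s} \<in> sets borel"
    using real_interval_borel_measurable by simp
qed


lemma lborel_Ici_inf: "emeasure lborel {0::real..} = \<infinity>"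
proof (rule ccontr)
  assume "emeasure lborel {0::real..} \<noteq> \<infinity>"
  then obtain r where r: "emeasure lborel {0::real..} = ennreal r" "0 \<le> r"
    by (cases "emeasure lborel {0::real..}") auto
  obtain n :: nat where n: "r < real n" using reals_Archimedean2 by blast
  have "ennreal (real n) = emeasure lborel {0..real n}" by simp
  also have "\<dots> \<le> emeasure lborel {0::real..}" by (rule emeasure_mono) auto
  finally have "real n \<le> r" using r by (simp add: ennreal_le_iff)
  with n show False by simp
qed

lemma lborel_cut:
  fixes g :: ennreal
  shows "(\<integral>\<^sup>+t. (if ennreal t < g \<and> 0 \<le> t then 1 else 0) \<partial>lborel) = g"
proof (cases "g = \<infinity>")
  case True
  then have "(\<lambda>t. (if ennreal t < g \<and> 0 \<le> t then 1 else 0) :: ennreal) = indicator {0..}"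
    by (auto simp: indicator_def fun_eq_iff)
  then show ?thesis using True lborel_Ici_inf by simp
next
  case False
  then obtain r where r: "g = ennreal r" "0 \<le> r" by (cases g) auto
  then have "(\<lambda>t. (if ennreal t < g \<and> 0 \<le> t then 1 else 0) :: ennreal) = indicator {0..<r}"
    by (auto simp: indicator_def fun_eq_iff ennreal_less_iff)
  then show ?thesis using r by simp
qed

lemma layer_cake:
  assumes sf: "sigma_finite_measure M" and g[measurable]: "g \<in> borel_measurable M"
  shows "(\<integral>\<^sup>+x. g x \<partial>M) = (\<integral>\<^sup>+t. emeasure M {x\<in>space M. ennreal t < g x} * indicator {0..} t \<partial>lborel)"
proof -
  interpret pair_sigma_finite M lborel
    unfolding pair_sigma_finite_def using sf lborel.sigma_finite_measure_axioms by simp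
  define f where "f x t = (if ennreal t < g x \<and> 0 \<le> t then 1 else 0 :: ennreal)" for x t
  have fm: "case_prod f \<in> borel_measurable (M \<Otimes>\<^sub>M lborel)"
    unfolding f_def by measurable
  have "(\<integral>\<^sup>+x. g x \<partial>M) = (\<integral>\<^sup>+x. (\<integral>\<^sup>+t. f x t \<partial>lborel) \<partial>M)"
    unfolding f_def lborel_cut ..
  also have "\<dots> = (\<integral>\<^sup>+t. (\<integral>\<^sup>+x. f x t \<partial>M) \<partial>lborel)"
    by (rule Fubini'[OF fm, symmetric])
  also have "\<dots> = (\<integral>\<^sup>+t. emeasure M {x\<in>space M. ennreal t < g x} * indicator {0..} t \<partial>lborel)"
  proof (rule nn_integral_cong)
    fix t :: real
    show "(\<integral>\<^sup>+x. f x t \<partial>M) = emeasure M {x\<in>space M. ennreal t < g x} * indicator {0..} t"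
    proof (cases "0 \<le> t")
      case True
      have "(\<integral>\<^sup>+x. f x t \<partial>M) = (\<integral>\<^sup>+x. indicator {x\<in>space M. ennreal t < g x} x \<partial>M)"
        by (rule nn_integral_cong) (use True in \<open>auto simp: f_def indicator_def\<close>)
      also have "\<dots> = emeasure M {x\<in>space M. ennreal t < g x}"
        by (rule nn_integral_indicator) measurable
      finally show ?thesis using True by simp
    next
      case False
      then show ?thesis by (simp add: f_def)
    qed
  qed
  finally show ?thesis .
qed


definition Phi :: "(real \<Rightarrow> real) \<Rightarrow> real \<Rightarrow> real" where
  "Phi \<phi> a = (if a = 0 then 0 else \<phi> a)"

lemma Phi_nonneg: "classG \<phi> \<Longrightarrow> 0 \<le> a \<Longrightarrow> a \<le> 1 \<Longrightarrow> 0 \<le> Phi \<phi> a"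
  using G_pos[of \<phi> a] by (auto simp: Phi_def)

lemma Phi_mono: "classG \<phi> \<Longrightarrow> 0 \<le> a \<Longrightarrow> a \<le> b \<Longrightarrow> b \<le> 1 \<Longrightarrow> Phi \<phi> a \<le> Phi \<phi> b"
  using G_pos[of \<phi> b] G_mono[of \<phi> a b] by (auto simp: Phi_def)

lemma Phi_distf_anti:
  assumes G: "classG \<phi>" and meas: "x \<in> borel_measurable (lebesgue_on {0..1})" and "s \<le> t"
  shows "Phi \<phi> (distf x t) \<le> Phi \<phi> (distf x s)"
  by (rule Phi_mono[OF G distf_nonneg distf_antimono[OF meas assms(3)] distf_le1[OF meas]])

lemma antitone_meas:
  fixes h :: "real \<Rightarrow> ennreal"
  assumes neg: "\<And>t. t < 0 \<Longrightarrow> h t = 0" and anti: "\<And>s t. 0 \<le> s \<Longrightarrow> s \<le> t \<Longrightarrow> h t \<le> h s"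
  shows "h \<in> borel_measurable borel"
proof (rule borel_measurableI_greater)
  fix y :: ennreal
  have "is_interval {s. y < h s}"
    unfolding is_interval_1
  proof (intro ballI allI impI, elim conjE)
    fix a b z assume a: "a \<in> {s. y < h s}" and b: "b \<in> {s. y < h s}" and az: "a \<le> z" and zb: "z \<le> b"
    have "0 \<le> a" using a neg[of a] by (cases "a < 0") auto
    then have "h b \<le> h z" using az zb by (intro anti) auto
    then show "z \<in> {s. y < h s}" using b by auto
  qed
  then show "{s \<in> space borel. y < h s} \<in> sets borel"
    using real_interval_borel_measurable by simp
qed

lemma lnorm_LC:
  assumes G: "classG \<phi>" and meas: "x \<in> borel_measurable (lebesgue_on {0..1})"
  shows "lnorm \<phi> x = (\<integral>\<^sup>+t. ennreal (Phi \<phi> (distf x t)) * indicator {0..} t \<partial>lborel)"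
proof -
  have gm: "gfun x \<in> borel_measurable (mu \<phi>)"
    using gfun_meas[of x] by (simp cong: measurable_cong_sets)
  have "lnorm \<phi> x = (\<integral>\<^sup>+s. gfun x s \<partial>mu \<phi>)"
    by (simp add: lnorm_def gfun_def)
  also have "\<dots> = (\<integral>\<^sup>+t. emeasure (mu \<phi>) {s\<in>space (mu \<phi>). ennreal t < gfun x s} * indicator {0..} t \<partial>lborel)"
    by (rule layer_cake[OF mu_sigma_finite[OF G] gm])
  also have "\<dots> = (\<integral>\<^sup>+t. ennreal (Phi \<phi> (distf x t)) * indicator {0..} t \<partial>lborel)"
  proof (rule nn_integral_cong)
    fix t :: real
    show "emeasure (mu \<phi>) {s\<in>space (mu \<phi>). ennreal t < gfun x s} * indicator {0..} t
        = ennreal (Phi \<phi> (distf x t)) * indicator {0..} t"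
    proof (cases "0 \<le> t")
      case False then show ?thesis by simp
    next
      case True
      have sp: "{s\<in>space (mu \<phi>). ennreal t < gfun x s} = {s. ennreal t < gfun x s}" by simp
      show ?thesis
      proof (cases "distf x t = 0")
        case True
        then show ?thesis using gfun_level(3)[OF meas \<open>0 \<le> t\<close>] by (simp add: Phi_def)
      next
        case False
        then have a: "0 < distf x t" "distf x t \<le> 1"
          using distf_nonneg[of x t] distf_le1[OF meas] by auto
        have Lm: "{s. ennreal t < gfun x s} \<in> sets borel"
        proof -
          have "{s \<in> space borel. ennreal t < gfun x s} \<in> sets borel"
            using gfun_meas[of x] by measurable
          then show ?thesis by simp
        qed
        have "emeasure (mu \<phi>) {s. ennreal t < gfun x s} = ennreal (\<phi> (distf x t))"
          by (rule mu_initial[OF G a gfun_level(1,2)[OF meas \<open>0 \<le> t\<close>] Lm])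
        then show ?thesis using False True sp by (simp add: Phi_def)
      qed
    qed
  qed
  finally show ?thesis .
qed

lemma Phi_ind_meas:
  assumes G: "classG \<phi>" and meas: "x \<in> borel_measurable (lebesgue_on {0..1})"
  shows "(\<lambda>t. ennreal (Phi \<phi> (distf x t)) * indicator {0..} t) \<in> borel_measurable borel"
proof (rule antitone_meas)
  fix s t :: real assume "0 \<le> s" "s \<le> t"
  then show "ennreal (Phi \<phi> (distf x t)) * indicator {0..} t \<le> ennreal (Phi \<phi> (distf x s)) * indicator {0..} s"
    using Phi_distf_anti[OF G meas] by (auto intro: ennreal_leI)
qed simp

lemma lnorm_compare:
  assumes G: "classG \<phi>" "classG \<psi>" and meas: "x \<in> borel_measurable (lebesgue_on {0..1})"
    and C: "0 \<le> C" and cmp: "\<And>t. 0 \<le> t \<Longrightarrow> Phi \<phi> (distf x t) \<le> C * Phi \<psi> (distf x t)"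
  shows "lnorm \<phi> x \<le> ennreal C * lnorm \<psi> x"
proof -
  have "lnorm \<phi> x = (\<integral>\<^sup>+t. ennreal (Phi \<phi> (distf x t)) * indicator {0..} t \<partial>lborel)"
    by (rule lnorm_LC[OF G(1) meas])
  also have "\<dots> \<le> (\<integral>\<^sup>+t. ennreal C * (ennreal (Phi \<psi> (distf x t)) * indicator {0..} t) \<partial>lborel)"
  proof (rule nn_integral_mono)
    fix t :: real
    show "ennreal (Phi \<phi> (distf x t)) * indicator {0..} t \<le> ennreal C * (ennreal (Phi \<psi> (distf x t)) * indicator {0..} t)"
    proof (cases "0 \<le> t")
      case True
      have "ennreal (Phi \<phi> (distf x t)) \<le> ennreal (C * Phi \<psi> (distf x t))"
        using cmp[OF True] by (rule ennreal_leI)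
      also have "\<dots> = ennreal C * ennreal (Phi \<psi> (distf x t))"
        using C Phi_nonneg[OF G(2) distf_nonneg distf_le1[OF meas]] by (simp add: ennreal_mult)
      finally show ?thesis using True by simp
    qed simp
  qed
  also have "\<dots> = ennreal C * lnorm \<psi> x"
  proof -
    have "(\<lambda>t. ennreal (Phi \<psi> (distf x t)) * indicator {0..} t) \<in> borel_measurable lborel"
      using Phi_ind_meas[OF G(2) meas] by simp
    then show ?thesis by (subst nn_integral_cmult) (simp_all add: lnorm_LC[OF G(2) meas])
  qed
  finally show ?thesis .
qed

lemma lnorm_lower:
  assumes G: "classG \<phi>" and meas: "x \<in> borel_measurable (lebesgue_on {0..1})" and eta: "0 < \<eta>"
  shows "ennreal (\<eta> * Phi \<phi> (distf x \<eta>)) \<le> lnorm \<phi> x"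
proof -
  have nn: "0 \<le> Phi \<phi> (distf x \<eta>)" by (rule Phi_nonneg[OF G distf_nonneg distf_le1[OF meas]])
  have "ennreal (\<eta> * Phi \<phi> (distf x \<eta>)) = ennreal (Phi \<phi> (distf x \<eta>)) * emeasure lborel {0..\<eta>}"
    using eta nn by (simp add: ennreal_mult mult.commute)
  also have "\<dots> = (\<integral>\<^sup>+t. ennreal (Phi \<phi> (distf x \<eta>)) * indicator {0..\<eta>} t \<partial>lborel)"
    by (rule nn_integral_cmult_indicator[symmetric]) simp
  also have "\<dots> \<le> (\<integral>\<^sup>+t. ennreal (Phi \<phi> (distf x t)) * indicator {0..} t \<partial>lborel)"
  proof (rule nn_integral_mono)
    fix t :: real
    show "ennreal (Phi \<phi> (distf x \<eta>)) * indicator {0..\<eta>} t \<le> ennreal (Phi \<phi> (distf x t)) * indicator {0..} t"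
      using Phi_distf_anti[OF G meas, of t \<eta>] by (auto simp: indicator_def intro: ennreal_leI)
  qed
  also have "\<dots> = lnorm \<phi> x" by (rule lnorm_LC[OF G meas, symmetric])
  finally show ?thesis .
qed

lemma distf_zero_fun: "0 \<le> t \<Longrightarrow> distf (\<lambda>s. 0) t = 0"
  by (simp add: distf_def)

lemma lnorm_zero:
  assumes G: "classG \<phi>"
  shows "lnorm \<phi> (\<lambda>s. 0) = 0"
proof -
  have "lnorm \<phi> (\<lambda>s. 0) = (\<integral>\<^sup>+t. ennreal (Phi \<phi> (distf (\<lambda>s. 0) t)) * indicator {0..} t \<partial>lborel)"
    by (rule lnorm_LC[OF G]) simp
  also have "\<dots> = (\<integral>\<^sup>+(t::real). 0 \<partial>lborel)"
    by (rule nn_integral_cong) (auto simp: indicator_def distf_zero_fun Phi_def)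
  finally show ?thesis by simp
qed

lemma lnorm_bounded:
  assumes G: "classG \<phi>" and meas: "x \<in> borel_measurable (lebesgue_on {0..1})"
    and bd: "\<And>s. \<bar>x s\<bar> \<le> 1"
  shows "lnorm \<phi> x < \<infinity>"
proof -
  have "lnorm \<phi> x = (\<integral>\<^sup>+t. ennreal (Phi \<phi> (distf x t)) * indicator {0..} t \<partial>lborel)"
    by (rule lnorm_LC[OF G meas])
  also have "\<dots> \<le> (\<integral>\<^sup>+(t::real). ennreal (\<phi> 1) * indicator {0..1} t \<partial>lborel)"
  proof (rule nn_integral_mono)
    fix t :: real
    show "ennreal (Phi \<phi> (distf x t)) * indicator {0..} t \<le> ennreal (\<phi> 1) * indicator {0..1} t"
    proof (cases "0 \<le> t")
      case True
      show ?thesis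
      proof (cases "t < 1")
        case True
        have "Phi \<phi> (distf x t) \<le> Phi \<phi> 1"
          by (rule Phi_mono[OF G distf_nonneg distf_le1[OF meas]]) simp
        then show ?thesis using True \<open>0 \<le> t\<close> by (auto simp: Phi_def intro: ennreal_leI)
      next
        case False
        then have "distf x t = 0" using bd unfolding distf_def
          by (smt (verit, ccfv_SIG) Collect_empty_eq measure_empty)
        then show ?thesis by (simp add: Phi_def)
      qed
    qed simp
  qed
  also have "\<dots> = ennreal (\<phi> 1)" by (subst nn_integral_cmult_indicator) auto
  finally show ?thesis using le_less_trans by fastforce
qed

lemma nonzero_distf:
  assumes meas: "x \<in> borel_measurable (lebesgue_on {0..1})" and nz: "nonzero_fun x"
  shows "0 < distf x 0"
proof (rule ccontr)
  assume "\<not> 0 < distf x 0"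
  then have "distf x 0 = 0" using distf_nonneg[of x 0] by linarith
  then have z: "measure lebesgue (lev x 0) = 0" by (simp only: distf_def)
  have "emeasure lebesgue (lev x 0) = ennreal (measure lebesgue (lev x 0))"
  proof (rule emeasure_eq_ennreal_measure)
    have "lev x 0 \<subseteq> {0..1}" by blast
    from emeasure_sub01_fin[OF this] show "emeasure lebesgue (lev x 0) \<noteq> top" by simp
  qed
  moreover have "lev x 0 \<in> sets lebesgue" by (rule lev_sets[OF meas])
  ultimately have "lev x 0 \<in> null_sets lebesgue" using z by (simp only: null_sets_def mem_Collect_eq ennreal_0 simp_thms)
  then have "AE s in lebesgue. s \<in> {0..1} \<longrightarrow> x s = 0"
    by (rule AE_I') auto
  then have "AE s in lebesgue_on {0..1}. x s = 0"
    by (subst AE_restrict_space_iff) auto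
  with nz show False by (simp add: nonzero_fun_def)
qed

lemma lnorm_pos:
  assumes G: "classG \<phi>" and meas: "x \<in> borel_measurable (lebesgue_on {0..1})" and nz: "nonzero_fun x"
  shows "0 < lnorm \<phi> x"
proof -
  obtain d where d: "d > 0" "0 < distf x (0 + d)"
    using distf_rcont_gt[OF meas nonzero_distf[OF meas nz]] by auto
  have "0 < \<phi> (distf x d)" using d distf_le1[OF meas] by (intro G_pos[OF G]) auto
  then have "0 < d * Phi \<phi> (distf x d)" using d by (simp add: Phi_def)
  then have "0 < ennreal (d * Phi \<phi> (distf x d))" by simp
  also have "\<dots> \<le> lnorm \<phi> x" by (rule lnorm_lower[OF G meas d(1)])
  finally show ?thesis .
qed


lemma Lorentz_meas: "x \<in> Lorentz \<phi> \<Longrightarrow> x \<in> borel_measurable (lebesgue_on {0..1})"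
  by (simp add: Lorentz_def)

lemma Lorentz_fin: "x \<in> Lorentz \<phi> \<Longrightarrow> lnorm \<phi> x < \<infinity>"
  by (simp add: Lorentz_def)

lemma ind_sum_le1:
  fixes S :: "nat \<Rightarrow> real set"
  assumes "\<forall>n m. n \<noteq> m \<longrightarrow> \<not> (s \<in> S n \<and> s \<in> S m)"
  shows "(\<Sum>n<N. indicator (S n) s :: ennreal) \<le> 1"
proof (cases "\<exists>n0<N. s \<in> S n0")
  case True
  then obtain n0 where n0: "n0 < N" "s \<in> S n0" by auto
  have "(\<Sum>n<N. indicator (S n) s :: ennreal) = (\<Sum>n\<in>{n0}. indicator (S n) s)"
    by (rule sum.mono_neutral_cong_right) (use n0 assms in \<open>auto simp: indicator_def\<close>)
  also have "\<dots> = 1" using n0 by simp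
  finally show ?thesis by simp
next
  case False
  then have "(\<Sum>n<N. indicator (S n) s :: ennreal) = 0"
    by (intro sum.neutral) (auto simp: indicator_def)
  then show ?thesis by simp
qed

lemma small_support:
  assumes meas: "\<And>n. x n \<in> borel_measurable (lebesgue_on {0..1})"
    and dis: "disjoint_seq x" and d: "0 < \<delta>"
  shows "\<exists>n. distf (x n) 0 < \<delta>"
proof (rule ccontr)
  assume "\<not> (\<exists>n. distf (x n) 0 < \<delta>)"
  then have big: "\<And>n. \<delta> \<le> distf (x n) 0" by (simp add: not_less)
  define M where "M = lebesgue_on {0..1::real}"
  define S where "S n = lev (x n) 0" for n
  have sp: "{0..1::real} \<inter> space lebesgue \<in> sets lebesgue" by simp
  have SL: "S n \<in> sets lebesgue" for n unfolding S_def by (rule lev_sets[OF meas])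
  have SM: "S n \<in> sets M" for n
    unfolding M_def by (subst sets_restrict_space_iff[OF sp]) (use SL in \<open>auto simp: S_def\<close>)
  have eS: "emeasure M (S n) = ennreal (distf (x n) 0)" for n
  proof -
    have "emeasure M (S n) = emeasure lebesgue (S n)"
      unfolding M_def by (rule emeasure_restrict_space[OF sp]) (auto simp: S_def)
    also have "\<dots> = ennreal (measure lebesgue (S n))"
    proof (rule emeasure_eq_ennreal_measure)
      have "S n \<subseteq> {0..1}" by (auto simp: S_def)
      from emeasure_sub01_fin[OF this] show "emeasure lebesgue (S n) \<noteq> top" by simp
    qed
    finally show ?thesis by (simp add: S_def distf_def)
  qed
  have AE: "AE s in M. \<forall>n m. n \<noteq> m \<longrightarrow> \<not> (s \<in> S n \<and> s \<in> S m)"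
  proof -
    have "\<forall>n m. AE s in M. n \<noteq> m \<longrightarrow> \<not> (s \<in> S n \<and> s \<in> S m)"
    proof (intro allI)
      fix n m :: nat
      show "AE s in M. n \<noteq> m \<longrightarrow> \<not> (s \<in> S n \<and> s \<in> S m)"
      proof (cases "n = m")
        case False
        then have "AE s in M. x n s = 0 \<or> x m s = 0" using dis unfolding disjoint_seq_def M_def by auto
        then show ?thesis by (rule eventually_mono) (auto simp: S_def)
      qed simp
    qed
    then show ?thesis by (simp add: AE_all_countable)
  qed
  obtain N :: nat where N: "1 / \<delta> < real N" using reals_Archimedean2 by blast
  have "(\<Sum>n<N. emeasure M (S n)) = (\<integral>\<^sup>+s. (\<Sum>n<N. indicator (S n) s) \<partial>M)"
    by (subst nn_integral_sum) (auto simp: SM borel_measurable_indicator)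
  also have "\<dots> \<le> (\<integral>\<^sup>+s. 1 \<partial>M)"
    by (rule nn_integral_mono_AE) (use AE in \<open>auto elim!: eventually_mono intro: ind_sum_le1\<close>)
  also have "\<dots> = 1" unfolding M_def
    by (simp add: emeasure_restrict_space)
  finally have "(\<Sum>n<N. ennreal (distf (x n) 0)) \<le> 1" by (simp add: eS)
  then have s1: "(\<Sum>n<N. distf (x n) 0) \<le> 1"
    by (simp add: distf_nonneg sum_nonneg)
  have "real N * \<delta> \<le> (\<Sum>n<N. distf (x n) 0)"
    using sum_mono[of "{..<N}" "\<lambda>_. \<delta>" "\<lambda>n. distf (x n) 0"] big by simp
  moreover have "1 < real N * \<delta>" using N d by (simp add: field_simps)
  ultimately show False using s1 by simp
qed

lemma A_imp_notE:
  assumes G: "classG \<phi>" "classG \<psi>"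
    and A: "((\<lambda>t. \<psi> t / \<phi> t) \<longlongrightarrow> 0) (at_right 0)"
    and C2: "C2 > 0" and xL: "\<And>n. x n \<in> Lorentz \<phi>" and nz: "\<And>n. nonzero_fun (x n)"
    and dis: "disjoint_seq x" and ineq: "\<And>n. lnorm \<phi> (x n) \<le> ennreal C2 * lnorm \<psi> (x n)"
  shows False
proof -
  define \<epsilon> where "\<epsilon> = 1 / (2 * C2)"
  have e: "0 < \<epsilon>" using C2 by (simp add: \<epsilon>_def)
  have "\<forall>\<^sub>F t in at_right 0. dist (\<psi> t / \<phi> t) 0 < \<epsilon>"
    using A e by (rule tendstoD)
  then obtain b where b: "b > 0" "\<And>t. 0 < t \<Longrightarrow> t < b \<Longrightarrow> dist (\<psi> t / \<phi> t) 0 < \<epsilon>"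
    unfolding eventually_at_right_field by auto
  define \<delta> where "\<delta> = min b 1"
  have meas: "\<And>n. x n \<in> borel_measurable (lebesgue_on {0..1})" using Lorentz_meas[OF xL] .
  obtain n where n: "distf (x n) 0 < \<delta>"
    using small_support[OF meas dis, of \<delta>] b by (auto simp: \<delta>_def)
  have cmp: "lnorm \<psi> (x n) \<le> ennreal \<epsilon> * lnorm \<phi> (x n)"
  proof (rule lnorm_compare[OF G(2) G(1) meas])
    show "0 \<le> \<epsilon>" using e by simp
    fix t :: real assume t: "0 \<le> t"
    define a where "a = distf (x n) t"
    have a: "0 \<le> a" "a < \<delta>" using distf_nonneg[of "x n" t] distf_antimono[OF meas t, of n] n
      by (auto simp: a_def)
    show "Phi \<psi> a \<le> \<epsilon> * Phi \<phi> a"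
    proof (cases "a = 0")
      case True then show ?thesis by (simp add: Phi_def)
    next
      case False
      then have a': "0 < a" "a < b" "a \<le> 1" using a by (auto simp: \<delta>_def)
      have pa: "0 < \<phi> a" by (rule G_pos[OF G(1) a'(1) a'(3)])
      have pb: "0 < \<psi> a" by (rule G_pos[OF G(2) a'(1) a'(3)])
      have "\<psi> a / \<phi> a < \<epsilon>" using b(2)[OF a'(1,2)] pa pb by (simp add: dist_real_def)
      then have "\<psi> a < \<epsilon> * \<phi> a" using pa by (simp add: divide_less_eq)
      then show ?thesis using False by (simp add: Phi_def)
    qed
  qed
  have pos: "0 < lnorm \<phi> (x n)" by (rule lnorm_pos[OF G(1) meas nz])
  have fin: "lnorm \<phi> (x n) < \<infinity>" by (rule Lorentz_fin[OF xL])
  then obtain r where r: "lnorm \<phi> (x n) = ennreal r" "0 \<le> r"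
    by (cases "lnorm \<phi> (x n)") auto
  have rp: "0 < r" using pos r by simp
  have "ennreal r \<le> ennreal C2 * (ennreal \<epsilon> * ennreal r)"
    using ineq[of n] cmp r by (metis (no_types, lifting) dual_order.trans mult_left_mono zero_le)
  also have "\<dots> = ennreal (C2 * \<epsilon> * r)" using C2 e r by (simp add: ennreal_mult mult.assoc)
  also have "C2 * \<epsilon> * r = r / 2" using C2 by (simp add: \<epsilon>_def)
  finally have "r \<le> r / 2" using rp by (simp add: ennreal_le_iff)
  then show False using rp by simp
qed

lemma notE_imp_DSS:
  assumes G: "classG \<phi>"
    and nE: "\<not> (\<exists>x C2. C2 > 0 \<and> (\<forall>n. x n \<in> Lorentz \<phi> \<and> nonzero_fun (x n)) \<and> disjoint_seq x
                  \<and> (\<forall>n. lnorm \<phi> (x n) \<le> ennreal C2 * lnorm \<psi> (x n)))"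
  shows "DSS_incl \<phi> \<psi>"
  unfolding DSS_incl_def
proof
  assume "\<exists>x. (\<forall>n. x n \<in> Lorentz \<phi> \<and> nonzero_fun (x n)) \<and> disjoint_seq x \<and> incl_iso_on \<phi> \<psi> (clspan \<phi> x)"
  then obtain x c where x: "\<forall>n. x n \<in> Lorentz \<phi> \<and> nonzero_fun (x n)" "disjoint_seq x"
    and c: "c > 0" "\<forall>y\<in>clspan \<phi> x. lnorm \<phi> y \<le> ennreal c * lnorm \<psi> y"
    unfolding incl_iso_on_def by auto
  have "x n \<in> clspan \<phi> x" for n
    unfolding clspan_def
  proof (intro CollectI conjI allI impI)
    show "x n \<in> Lorentz \<phi>" using x by auto
    fix e :: real assume e: "0 < e"
    have eq: "(\<lambda>s. x n s - (\<Sum>i<Suc n. (if i = n then 1 else 0) * x i s)) = (\<lambda>s. 0)"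
      by (simp add: if_distrib)
    show "\<exists>N a. lnorm \<phi> (\<lambda>s. x n s - (\<Sum>i<N. a i * x i s)) < ennreal e"
      by (intro exI[of _ "Suc n"] exI[of _ "\<lambda>i. if i = n then 1 else 0"])
         (simp only: eq lnorm_zero[OF G], simp add: e)
  qed
  then have "\<forall>n. lnorm \<phi> (x n) \<le> ennreal c * lnorm \<psi> (x n)" using c by auto
  with nE x c show False by blast
qed


lemma notA_good:
  assumes G: "classG \<phi>" "classG \<psi>"
    and nA: "\<not> ((\<lambda>t. \<psi> t / \<phi> t) \<longlongrightarrow> 0) (at_right 0)"
  shows "\<exists>c>0. \<forall>\<delta>>0. \<exists>t. 0 < t \<and> t < \<delta> \<and> t \<le> 1 \<and> c * \<phi> t \<le> \<psi> t"
proof (rule ccontr)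
  assume H: "\<not> ?thesis"
  have "((\<lambda>t. \<psi> t / \<phi> t) \<longlongrightarrow> 0) (at_right 0)"
  proof (rule tendstoI)
    fix e :: real assume e: "0 < e"
    from H e have "\<exists>\<delta>>0. \<forall>t. \<not> (0 < t \<and> t < \<delta> \<and> t \<le> 1 \<and> e * \<phi> t \<le> \<psi> t)" by blast
    then obtain \<delta> where d0: "\<delta> > 0" "\<forall>t. \<not> (0 < t \<and> t < \<delta> \<and> t \<le> 1 \<and> e * \<phi> t \<le> \<psi> t)" by blast
    have d: "\<delta> > 0" "\<And>t. 0 < t \<Longrightarrow> t < \<delta> \<Longrightarrow> t \<le> 1 \<Longrightarrow> \<psi> t < e * \<phi> t"
      using d0 by (auto simp: not_le)
    show "\<forall>\<^sub>F t in at_right 0. dist (\<psi> t / \<phi> t) 0 < e"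
      unfolding eventually_at_right_field
    proof (intro exI[of _ "min \<delta> 1"] conjI allI impI)
      show "0 < min \<delta> 1" using d by simp
      fix t :: real assume t: "0 < t" "t < min \<delta> 1"
      have pa: "0 < \<phi> t" by (rule G_pos[OF G(1)]) (use t in auto)
      have pb: "0 < \<psi> t" by (rule G_pos[OF G(2)]) (use t in auto)
      have "\<psi> t < e * \<phi> t" by (rule d(2)) (use t in auto)
      then have "\<psi> t / \<phi> t < e" using pa by (simp add: divide_less_eq)
      then show "dist (\<psi> t / \<phi> t) 0 < e" using pa pb by (simp add: dist_real_def)
    qed
  qed
  with nA show False by simp
qed

definition nextT :: "(real \<Rightarrow> bool) \<Rightarrow> real \<Rightarrow> real" where
  "nextT P d = (SOME t. P t \<and> t < d)"

fun Tseq :: "(real \<Rightarrow> bool) \<Rightarrow> nat \<Rightarrow> real" where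
  "Tseq P 0 = nextT P (1/4)"
| "Tseq P (Suc n) = nextT P (Tseq P n / 2)"

lemma nextT:
  assumes "\<forall>\<delta>>0. \<exists>t. P t \<and> t < \<delta>" "0 < d"
  shows "P (nextT P d) \<and> nextT P d < d"
  unfolding nextT_def by (rule someI_ex) (use assms in auto)

lemma Tseq_props:
  assumes ex: "\<forall>\<delta>>0. \<exists>t. P t \<and> t < \<delta>" and pos: "\<And>t. P t \<Longrightarrow> 0 < t"
  shows "P (Tseq P n) \<and> Tseq P n < 1/4 \<and> Tseq P (Suc n) < Tseq P n / 2"
proof (induction n)
  case 0
  have a: "P (Tseq P 0) \<and> Tseq P 0 < 1/4" using nextT[OF ex, of "1/4"] by simp
  then have "0 < Tseq P 0 / 2" using pos by auto
  then show ?case using a nextT[OF ex, of "Tseq P 0 / 2"] by simp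
next
  case (Suc n)
  have a: "P (Tseq P (Suc n)) \<and> Tseq P (Suc n) < 1/4" using Suc nextT[OF ex, of "Tseq P n / 2"] pos by force
  then have "0 < Tseq P (Suc n) / 2" using pos by auto
  then show ?case using a nextT[OF ex, of "Tseq P (Suc n) / 2"] by simp
qed

locale lac =
  fixes T :: "nat \<Rightarrow> real"
  assumes Tpos: "\<And>n. 0 < T n" and Tq: "\<And>n. T n < 1/4" and Thalf: "\<And>n. T (Suc n) < T n / 2"
begin

lemma tele: "(\<Sum>i\<in>{n..<n+k}. T i) \<le> 2 * T n - 2 * T (n+k)"
proof (induction k)
  case 0 then show ?case by simp
next
  case (Suc k)
  have "(\<Sum>i\<in>{n..<n + Suc k}. T i) = (\<Sum>i\<in>{n..<n+k}. T i) + T (n+k)" by simp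
  also have "\<dots> \<le> 2 * T n - 2 * T (n+k) + T (n+k)" using Suc by simp
  also have "\<dots> \<le> 2 * T n - 2 * T (n + Suc k)" using Thalf[of "n+k"] by simp
  finally show ?case .
qed

lemma partial_le: "(\<Sum>i<n. T i) \<le> 2 * T 0"
proof -
  have "(\<Sum>i<n. T i) = (\<Sum>i\<in>{0..<0+n}. T i)" by (simp add: atLeast0LessThan)
  also have "\<dots> \<le> 2 * T 0 - 2 * T (0 + n)" by (rule tele)
  also have "\<dots> \<le> 2 * T 0" using Tpos[of n] by simp
  finally show ?thesis .
qed

lemma subset_sum:
  assumes F: "finite F" "F \<noteq> {}"
  shows "T (Min F) \<le> (\<Sum>i\<in>F. T i)" "(\<Sum>i\<in>F. T i) \<le> 2 * T (Min F)"
proof -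
  let ?j = "Min F"
  show "T ?j \<le> (\<Sum>i\<in>F. T i)"
    by (rule member_le_sum) (use F Tpos in \<open>auto intro: less_imp_le\<close>)
  have sub: "F \<subseteq> {?j..<?j + (Max F + 1 - ?j)}"
  proof
    fix x assume x: "x \<in> F"
    have "?j \<le> x" "x \<le> Max F" using F x by auto
    then show "x \<in> {?j..<?j + (Max F + 1 - ?j)}" by auto
  qed
  have "(\<Sum>i\<in>F. T i) \<le> (\<Sum>i\<in>{?j..<?j + (Max F + 1 - ?j)}. T i)"
    by (rule sum_mono2[OF _ sub]) (use Tpos in \<open>auto intro: less_imp_le\<close>)
  also have "\<dots> \<le> 2 * T ?j - 2 * T (?j + (Max F + 1 - ?j))" by (rule tele)
  also have "\<dots> \<le> 2 * T ?j" using Tpos by (simp add: less_imp_le)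
  finally show "(\<Sum>i\<in>F. T i) \<le> 2 * T (Min F)" .
qed

definition u :: "nat \<Rightarrow> real" where "u n = 1 - (\<Sum>i<n. T i)"
definition AA :: "nat \<Rightarrow> real set" where "AA n = {u (Suc n)<..u n}"

lemma u_ge: "1/2 \<le> u n"
  using partial_le[of n] Tq[of 0] by (simp add: u_def)

lemma u_le: "u n \<le> 1"
  using sum_nonneg[of "{..<n}" T] Tpos by (simp add: u_def less_imp_le)

lemma u_Suc: "u (Suc n) = u n - T n"
  by (simp add: u_def)

lemma u_anti: "n \<le> m \<Longrightarrow> u m \<le> u n"
proof (induction m rule: dec_induct)
  case (step m) then show ?case using u_Suc[of m] Tpos[of m] by simp
qed simp

lemma AA_sub: "AA n \<subseteq> {0..1}"
  using u_ge[of "Suc n"] u_le[of n] by (auto simp: AA_def)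

lemma AA_disj: "n \<noteq> m \<Longrightarrow> AA n \<inter> AA m = {}"
proof -
  have *: "AA n \<inter> AA m = {}" if "n < m" for n m
  proof -
    have "u m \<le> u (Suc n)" using that by (intro u_anti) simp
    then show ?thesis by (auto simp: AA_def)
  qed
  assume "n \<noteq> m"
  then show ?thesis using *[of n m] *[of m n] by (cases "n < m") auto
qed

lemma AA_meas: "measure lebesgue (AA n) = T n"
  using u_Suc[of n] Tpos[of n] by (simp add: AA_def)

lemma AA_emeas: "emeasure lebesgue (AA n) = ennreal (T n)"
  using u_Suc[of n] Tpos[of n] by (simp add: AA_def)

definition xx :: "nat \<Rightarrow> real \<Rightarrow> real" where "xx n = indicator (AA n)"

lemma xx_meas: "xx n \<in> borel_measurable (lebesgue_on {0..1})"
  unfolding xx_def AA_def by (intro measurable_restrict_space1 borel_measurable_indicator) simp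

lemma z_val:
  assumes "s \<in> AA j"
  shows "(\<Sum>i<N. b i * xx i s) = (if j < N then b j else 0)"
proof -
  have "(\<Sum>i<N. b i * xx i s) = (\<Sum>i<N. if i = j then b i else 0)"
  proof (rule sum.cong)
    fix i assume "i \<in> {..<N}"
    show "b i * xx i s = (if i = j then b i else 0)"
      using assms AA_disj[of i j] by (auto simp: xx_def indicator_def)
  qed simp
  then show ?thesis by simp
qed

lemma z_val0:
  assumes "\<forall>j. s \<notin> AA j"
  shows "(\<Sum>i<N. b i * xx i s) = 0"
  using assms by (auto simp: xx_def indicator_def intro!: sum.neutral)

lemma distf_z:
  assumes l: "0 \<le> l"
  shows "distf (\<lambda>s. \<Sum>i<N. b i * xx i s) l = (\<Sum>i\<in>{i. i < N \<and> l < \<bar>b i\<bar>}. T i)"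
proof -
  let ?F = "{i. i < N \<and> l < \<bar>b i\<bar>}"
  have eq: "lev (\<lambda>s. \<Sum>i<N. b i * xx i s) l = (\<Union>i\<in>?F. AA i)"
  proof (intro equalityI subsetI)
    fix s assume s: "s \<in> lev (\<lambda>s. \<Sum>i<N. b i * xx i s) l"
    show "s \<in> (\<Union>i\<in>?F. AA i)"
    proof (cases "\<exists>j. s \<in> AA j")
      case True
      then obtain j where j: "s \<in> AA j" by auto
      then show ?thesis using s z_val[OF j, where N=N and b=b] l by (auto split: if_splits)
    next
      case False
      then show ?thesis using s z_val0[where s=s and N=N and b=b] l by auto
    qed
  next
    fix s assume "s \<in> (\<Union>i\<in>?F. AA i)"
    then obtain j where j: "j \<in> ?F" "s \<in> AA j" by auto
    then show "s \<in> lev (\<lambda>s. \<Sum>i<N. b i * xx i s) l"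
      using z_val[OF j(2), where N=N and b=b] AA_sub[of j] by auto
  qed
  have "measure lebesgue (\<Union>i\<in>?F. AA i) = (\<Sum>i\<in>?F. measure lebesgue (AA i))"
  proof (rule measure_finite_Union)
    show "finite ?F" by simp
    show "AA ` ?F \<subseteq> sets lebesgue" by (auto simp: AA_def)
    show "disjoint_family_on AA ?F" using AA_disj by (auto simp: disjoint_family_on_def)
    show "\<And>i. i \<in> ?F \<Longrightarrow> emeasure lebesgue (AA i) \<noteq> \<infinity>" by (simp add: AA_emeas)
  qed
  then show ?thesis unfolding distf_def eq by (simp add: AA_meas)
qed

end


lemma distf_split:
  assumes mf: "f \<in> borel_measurable (lebesgue_on {0..1})"
    and mg: "g \<in> borel_measurable (lebesgue_on {0..1})"
    and mh: "h \<in> borel_measurable (lebesgue_on {0..1})"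
    and H: "\<And>s. s \<in> {0..1} \<Longrightarrow> l1 < \<bar>f s\<bar> \<Longrightarrow> l2 < \<bar>g s\<bar> \<or> l3 < \<bar>h s\<bar>"
  shows "distf f l1 \<le> distf g l2 + distf h l3"
proof -
  have sub: "lev f l1 \<subseteq> lev g l2 \<union> lev h l3" using H by auto
  have fm: "lev g l2 \<union> lev h l3 \<in> fmeasurable lebesgue"
    using lev_fmeas[OF mg] lev_fmeas[OF mh] by (rule fmeasurable.Un)
  have "distf f l1 \<le> measure lebesgue (lev g l2 \<union> lev h l3)"
    unfolding distf_def by (rule measure_mono_fmeasurable[OF sub lev_sets[OF mf] fm])
  also have "\<dots> \<le> distf g l2 + distf h l3"
    unfolding distf_def by (rule measure_Un_le[OF lev_sets[OF mg] lev_sets[OF mh]])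
  finally show ?thesis .
qed

context lac
begin

lemma subset_good:
  assumes G: "classG \<phi>" "classG \<psi>" and c: "0 < c" and hyp: "\<And>n. c * \<phi> (T n) \<le> \<psi> (T n)"
    and F: "finite F" "F \<noteq> {}"
  shows "0 < (\<Sum>i\<in>F. T i) \<and> (\<Sum>i\<in>F. T i) \<le> 1/2 \<and> c * \<phi> (\<Sum>i\<in>F. T i) \<le> 3 * \<psi> (\<Sum>i\<in>F. T i)"
proof -
  let ?S = "\<Sum>i\<in>F. T i" and ?j = "Min F"
  have s1: "T ?j \<le> ?S" and s2: "?S \<le> 2 * T ?j" using subset_sum[OF F] by auto
  have tj: "0 < T ?j" "T ?j < 1/4" using Tpos Tq by auto
  have "\<phi> ?S \<le> \<phi> (2 * T ?j)" by (rule G_mono[OF G(1)]) (use s1 s2 tj in auto)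
  also have "\<dots> \<le> 3 * \<phi> (T ?j)" by (rule G_double[OF G(1)]) (use tj in auto)
  finally have "c * \<phi> ?S \<le> c * (3 * \<phi> (T ?j))" using c by simp
  also have "\<dots> = 3 * (c * \<phi> (T ?j))" by simp
  also have "\<dots> \<le> 3 * \<psi> (T ?j)" using hyp[of ?j] by simp
  also have "\<dots> \<le> 3 * \<psi> ?S"
  proof -
    have "\<psi> (T ?j) \<le> \<psi> ?S" by (rule G_mono[OF G(2)]) (use s1 s2 tj in auto)
    then show ?thesis by simp
  qed
  finally show ?thesis using s1 s2 tj by auto
qed

lemma approx:
  assumes G: "classG \<phi>" and y: "y \<in> clspan \<phi> xx" and t: "0 \<le> t"
    and a: "0 < distf y t" and rho: "0 < \<rho>" "\<rho> < distf y t"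
  shows "\<exists>F. finite F \<and> distf y t - 2 * \<rho> \<le> (\<Sum>i\<in>F. T i) \<and> (\<Sum>i\<in>F. T i) \<le> distf y t + \<rho>"
proof -
  define a where "a = distf y t"
  have yL: "y \<in> Lorentz \<phi>" using y by (simp add: clspan_def)
  note ym[measurable] = Lorentz_meas[OF yL]
  note xm[measurable] = xx_meas
  have a1: "a \<le> 1" unfolding a_def by (rule distf_le1[OF ym])
  obtain d where d: "d > 0" "a - \<rho> < distf y (t + d)"
    using distf_rcont_gt[OF ym, of "a - \<rho>" t] rho by (auto simp: a_def)
  define \<eta> where "\<eta> = d / 2"
  have eta: "0 < \<eta>" using d by (simp add: \<eta>_def)
  have r1: "0 < \<rho>" "\<rho> \<le> 1" using rho a1 by (auto simp: a_def)
  have prho: "0 < \<phi> \<rho>" by (rule G_pos[OF G r1])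
  define \<epsilon> where "\<epsilon> = \<eta> * \<phi> \<rho>"
  have e: "0 < \<epsilon>" using eta prho by (simp add: \<epsilon>_def)
  obtain N b where Nb: "lnorm \<phi> (\<lambda>s. y s - (\<Sum>i<N. b i * xx i s)) < ennreal \<epsilon>"
    using y e unfolding clspan_def by blast
  define z where "z = (\<lambda>s. \<Sum>i<N. b i * xx i s)"
  define w where "w = (\<lambda>s. y s - z s)"
  have zm: "z \<in> borel_measurable (lebesgue_on {0..1})" unfolding z_def by measurable
  have wm: "w \<in> borel_measurable (lebesgue_on {0..1})" unfolding w_def using zm by measurable
  have "ennreal (\<eta> * Phi \<phi> (distf w \<eta>)) < ennreal \<epsilon>"
    using lnorm_lower[OF G wm eta] Nb unfolding w_def z_def by (rule le_less_trans)
  moreover have "0 \<le> \<eta> * Phi \<phi> (distf w \<eta>)"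
    using eta Phi_nonneg[OF G distf_nonneg distf_le1[OF wm]] by simp
  ultimately have "\<eta> * Phi \<phi> (distf w \<eta>) < \<eta> * \<phi> \<rho>" by (simp add: \<epsilon>_def ennreal_less_iff)
  then have Pw: "Phi \<phi> (distf w \<eta>) < \<phi> \<rho>" using eta by simp
  have wsmall: "distf w \<eta> < \<rho>"
  proof (rule ccontr)
    assume "\<not> distf w \<eta> < \<rho>"
    then have "\<rho> \<le> distf w \<eta>" by simp
    moreover have "distf w \<eta> \<le> 1" by (rule distf_le1[OF wm])
    ultimately have "\<phi> \<rho> \<le> \<phi> (distf w \<eta>)" using r1 by (intro G_mono[OF G]) auto
    moreover have "Phi \<phi> (distf w \<eta>) = \<phi> (distf w \<eta>)" using \<open>\<rho> \<le> distf w \<eta>\<close> r1 by (simp add: Phi_def)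
    ultimately show False using Pw by simp
  qed
  define F where "F = {i. i < N \<and> t + \<eta> < \<bar>b i\<bar>}"
  have S: "distf z (t + \<eta>) = (\<Sum>i\<in>F. T i)"
    unfolding z_def F_def by (rule distf_z) (use t eta in auto)
  have up: "distf z (t + \<eta>) \<le> distf y t + distf w \<eta>"
    by (rule distf_split[OF zm ym wm]) (auto simp: w_def)
  have low: "distf y (t + d) \<le> distf z (t + \<eta>) + distf w \<eta>"
  proof (rule distf_split[OF ym zm wm])
    fix s assume "t + d < \<bar>y s\<bar>"
    moreover have "\<bar>y s\<bar> \<le> \<bar>z s\<bar> + \<bar>w s\<bar>" unfolding w_def by linarith
    ultimately show "t + \<eta> < \<bar>z s\<bar> \<or> \<eta> < \<bar>w s\<bar>" unfolding \<eta>_def by linarith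
  qed
  show ?thesis
    by (intro exI[of _ F] conjI) (use S up low wsmall d in \<open>auto simp: F_def a_def\<close>)
qed

end


context lac
begin

lemma key_good:
  assumes G: "classG \<phi>" "classG \<psi>" and c: "0 < c" and hyp: "\<And>n. c * \<phi> (T n) \<le> \<psi> (T n)"
    and y: "y \<in> clspan \<phi> xx" and t: "0 \<le> t" and a: "0 < distf y t"
  shows "c * \<phi> (distf y t) \<le> 3 * \<psi> (distf y t)"
proof (rule ccontr)
  define a0 where "a0 = distf y t"
  define h where "h s = c * \<phi> s - 3 * \<psi> s" for s
  assume "\<not> c * \<phi> (distf y t) \<le> 3 * \<psi> (distf y t)"
  then have ha: "0 < h a0" by (simp add: h_def a0_def)
  have yL: "y \<in> Lorentz \<phi>" using y by (simp add: clspan_def)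
  have a01: "0 < a0" "a0 \<le> 1" using a distf_le1[OF Lorentz_meas[OF yL]] by (auto simp: a0_def)
  have hc: "continuous_on {0<..1} h"
    unfolding h_def by (intro continuous_intros G_cont[OF G(1)] G_cont[OF G(2)])
  obtain r where r: "r > 0" "\<And>s. s \<in> {0<..1} \<Longrightarrow> dist s a0 < r \<Longrightarrow> dist (h s) (h a0) < h a0"
    using hc a01 ha unfolding continuous_on_iff by (metis greaterThanAtMost_iff)
  define \<rho> where "\<rho> = min (r/3) (a0/3)"
  have rho: "0 < \<rho>" "\<rho> < distf y t" using r a01 by (auto simp: \<rho>_def a0_def)
  obtain F where F: "finite F" "a0 - 2 * \<rho> \<le> (\<Sum>i\<in>F. T i)" "(\<Sum>i\<in>F. T i) \<le> a0 + \<rho>"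
    using approx[OF G(1) y t a rho] by (auto simp: a0_def)
  let ?S = "\<Sum>i\<in>F. T i"
  have Spos: "0 < ?S" using F(2) a01 by (auto simp: \<rho>_def)
  then have Fne: "F \<noteq> {}" by auto
  have good: "0 < ?S" "?S \<le> 1/2" "c * \<phi> ?S \<le> 3 * \<psi> ?S"
    using subset_good[OF G c hyp F(1) Fne] by auto
  have "dist ?S a0 < r" using F(2,3) r by (auto simp: dist_real_def \<rho>_def)
  then have "dist (h ?S) (h a0) < h a0" using good by (intro r(2)) auto
  then have "0 < h ?S" by (auto simp: dist_real_def)
  with good(3) show False by (simp add: h_def)
qed

lemma nonzero_xx: "nonzero_fun (xx n)"
  unfolding nonzero_fun_def
proof
  assume "AE s in lebesgue_on {0..1}. xx n s = 0"
  then obtain N where N: "{s \<in> space (lebesgue_on {0..1}). \<not> xx n s = 0} \<subseteq> N"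
    "emeasure (lebesgue_on {0..1}) N = 0" "N \<in> sets (lebesgue_on {0..1})"
    by (rule AE_E)
  have sub: "AA n \<subseteq> N"
  proof
    fix s assume s: "s \<in> AA n"
    then have "s \<in> {s \<in> space (lebesgue_on {0..1}). \<not> xx n s = 0}"
      using AA_sub[of n] by (auto simp: xx_def indicator_def)
    then show "s \<in> N" using N(1) by blast
  qed
  have "emeasure (lebesgue_on {0..1}) (AA n) \<le> emeasure (lebesgue_on {0..1}) N"
    by (rule emeasure_mono[OF sub N(3)])
  moreover have "emeasure (lebesgue_on {0..1}) (AA n) = emeasure lebesgue (AA n)"
    by (rule emeasure_restrict_space) (use AA_sub in auto)
  ultimately have "emeasure lebesgue (AA n) \<le> 0" using N(2) by simp
  then show False using AA_emeas[of n] Tpos[of n] by simp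
qed

end

lemma notA_imp_notDSS:
  assumes G: "classG \<phi>" "classG \<psi>"
    and nA: "\<not> ((\<lambda>t. \<psi> t / \<phi> t) \<longlongrightarrow> 0) (at_right 0)"
  shows "\<not> DSS_incl \<phi> \<psi>"
proof -
  obtain c where c: "c > 0" "\<forall>\<delta>>0. \<exists>t. 0 < t \<and> t < \<delta> \<and> t \<le> 1 \<and> c * \<phi> t \<le> \<psi> t"
    using notA_good[OF G nA] by blast
  define P where "P t = (0 < t \<and> t \<le> 1 \<and> c * \<phi> t \<le> \<psi> t)" for t
  have ex: "\<forall>\<delta>>0. \<exists>t. P t \<and> t < \<delta>" using c(2) by (auto simp: P_def)
  have pos: "\<And>t. P t \<Longrightarrow> 0 < t" by (simp add: P_def)
  define T where "T = Tseq P"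
  have TP: "P (T n) \<and> T n < 1/4 \<and> T (Suc n) < T n / 2" for n
    unfolding T_def by (rule Tseq_props[OF ex pos])
  interpret lac T
    by unfold_locales (use TP pos in auto)
  have hyp: "\<And>n. c * \<phi> (T n) \<le> \<psi> (T n)" using TP by (simp add: P_def)
  have xL: "xx n \<in> Lorentz \<phi>" for n
    unfolding Lorentz_def
    by (intro CollectI conjI xx_meas lnorm_bounded[OF G(1) xx_meas]) (auto simp: xx_def indicator_def)
  have dis: "disjoint_seq xx"
    unfolding disjoint_seq_def
  proof (intro allI impI AE_I2)
    fix n m :: nat and s assume "n \<noteq> m"
    then show "xx n s = 0 \<or> xx m s = 0" using AA_disj[of n m] by (auto simp: xx_def indicator_def)
  qed
  have iso: "incl_iso_on \<phi> \<psi> (clspan \<phi> xx)"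
    unfolding incl_iso_on_def
  proof (intro exI[of _ "3 / c"] conjI ballI)
    show "0 < 3 / c" using c by simp
    fix y assume y: "y \<in> clspan \<phi> xx"
    have yL: "y \<in> Lorentz \<phi>" using y by (simp add: clspan_def)
    show "lnorm \<phi> y \<le> ennreal (3 / c) * lnorm \<psi> y"
    proof (rule lnorm_compare[OF G Lorentz_meas[OF yL]])
      show "0 \<le> 3 / c" using c by simp
      fix t :: real assume t: "0 \<le> t"
      show "Phi \<phi> (distf y t) \<le> 3 / c * Phi \<psi> (distf y t)"
      proof (cases "distf y t = 0")
        case True then show ?thesis by (simp add: Phi_def)
      next
        case False
        then have a: "0 < distf y t" using distf_nonneg[of y t] by simp
        have "c * \<phi> (distf y t) \<le> 3 * \<psi> (distf y t)"
          by (rule key_good[OF G c(1) hyp y t a])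
        then have "\<phi> (distf y t) \<le> 3 / c * \<psi> (distf y t)" using c
          by (simp add: field_simps)
        then show ?thesis using False by (simp add: Phi_def)
      qed
    qed
  qed
  show ?thesis
    unfolding DSS_incl_def using xL nonzero_xx dis iso by blast
qed

theorem corollary1:
  fixes \<phi> \<psi> :: "real \<Rightarrow> real" and C1 :: real
  assumes "classG \<phi>" and "classG \<psi>" and "C1 > 0"
    and "\<forall>t\<in>{0<..1}. \<psi> t \<le> C1 * \<phi> t"
  shows "(((\<lambda>t. \<psi> t / \<phi> t) \<longlongrightarrow> 0) (at_right 0) \<longleftrightarrow> DSS_incl \<phi> \<psi>)
       \<and> (DSS_incl \<phi> \<psi> \<longleftrightarrow>
          \<not> (\<exists>x C2. C2 > 0 \<and> (\<forall>n. x n \<in> Lorentz \<phi> \<and> nonzero_fun (x n)) \<and> disjoint_seq x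
                  \<and> (\<forall>n. lnorm \<phi> (x n) \<le> ennreal C2 * lnorm \<psi> (x n))))"
proof -
  let ?A = "((\<lambda>t. \<psi> t / \<phi> t) \<longlongrightarrow> 0) (at_right 0)"
  let ?E = "\<exists>x C2. C2 > 0 \<and> (\<forall>n. x n \<in> Lorentz \<phi> \<and> nonzero_fun (x n)) \<and> disjoint_seq x
                  \<and> (\<forall>n. lnorm \<phi> (x n) \<le> ennreal C2 * lnorm \<psi> (x n))"
  have I: "?A \<Longrightarrow> \<not> ?E"
  proof
    assume A: ?A and E: ?E
    then obtain x C2 where "C2 > 0" "\<forall>n. x n \<in> Lorentz \<phi> \<and> nonzero_fun (x n)" "disjoint_seq x"
      "\<forall>n. lnorm \<phi> (x n) \<le> ennreal C2 * lnorm \<psi> (x n)" by blast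
    then show False using A_imp_notE[OF assms(1,2) A, of C2 x] by blast
  qed
  have II: "\<not> ?E \<Longrightarrow> DSS_incl \<phi> \<psi>" by (rule notE_imp_DSS[OF assms(1)])
  have III: "DSS_incl \<phi> \<psi> \<Longrightarrow> ?A" using notA_imp_notDSS[OF assms(1,2)] by blast
  show ?thesis using I II III by blast
qed


end
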